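(* Let $s$ be a continuous proper scoring rule with convex exposure on an $n$-outcome forecast domain $\mathcal{D}$, with exposure function $\mathbf{g}$, and fix $\mathbf{p}_1,\dots,\mathbf{p}_m\in\mathcal{D}$. For a weight vector $\mathbf{w}=(w_1,\dots,w_m)\in\Delta^m$ and $j\in[n]$ define the weight-score \[\mathrm{WS}_j(\mathbf{w}):=s(\mathbf{p}^*_{\mathbf{w}};j),\] where $\mathbf{p}^*_{\mathbf{w}}$ is the quasi-arithmetic pool of $(\mathbf{p}_i,w_i)_{i=1}^m$ with respect to $\mathbf{g}$. Then for every $j\in[n]$, $\mathrm{WS}_j$ is a concave function of $\mathbf{w}$ on $\Delta^m$.
   Context: $\Delta^k$ is the standard simplex in $\mathbb{R}^k$ (probability vectors); $\delta_j$ is the $j$-th standard basis vector. An $n$-outcome forecast domain is a convex $(n-1)$-dimensional subset of $\Delta^n$. A proper scoring rule on $\mathcal{D}$ is $s:\mathcal{D}\times[n]\to\mathbb{R}$ with $\sum_j p(j)s(\mathbf{p};j)\ge\sum_j p(j)s(\mathbf{x};j)$ for all $\mathbf{p},\mathbf{x}\in\mathcal{D}$, equality only if $\mathbf{x}=\mathbf{p}$. $G(\mathbf{p}):=\sum_j p(j)s(\mathbf{p};j)$ is differentiable and strictly convex, $\mathbf{g}=\nabla G$ (values modulo translation by the all-ones vector), and $s(\mathbf{p};j)=G(\mathbf{p})+\langle\mathbf{g}(\mathbf{p}),\delta_j-\mathbf{p}\rangle$. Convex exposure: the range of $\mathbf{g}$ is convex. The QA pool with weights $\mathbf{w}$ is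 the unique $\mathbf{p}^*_{\mathbf{w}}\in\mathcal{D}$ with $\mathbf{g}(\mathbf{p}^*_{\mathbf{w}})=\sum_i w_i\mathbf{g}(\mathbf{p}_i)$ (modulo the all-ones vector). *)

theory Defs
  imports "HOL-Analysis.Analysis"
begin

definition prob_simplex :: "(real ^ 'k) set" where
  "prob_simplex = {p. (\<forall>i. 0 \<le> p $ i) \<and> (\<Sum>i\<in>UNIV. p $ i) = 1}"

definition ones :: "real ^ 'k" where
  "ones = (\<chi> i. 1)"

definition delta :: "'k \<Rightarrow> real ^ 'k" where
  "delta j = (\<chi> i. if i = j then 1 else 0)"

definition forecast_domain :: "(real ^ 'n) set \<Rightarrow> bool" where
  "forecast_domain D \<longleftrightarrow> D \<subseteq> prob_simplex \<and> convex D \<and> aff_dim D = int CARD('n) - 1"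

definition proper_scoring_rule :: "(real ^ 'n) set \<Rightarrow> (real ^ 'n \<Rightarrow> 'n \<Rightarrow> real) \<Rightarrow> bool" where
  "proper_scoring_rule D s \<longleftrightarrow>
     (\<forall>p\<in>D. \<forall>x\<in>D. (\<Sum>j\<in>UNIV. p $ j * s p j) \<ge> (\<Sum>j\<in>UNIV. p $ j * s x j)
        \<and> ((\<Sum>j\<in>UNIV. p $ j * s p j) = (\<Sum>j\<in>UNIV. p $ j * s x j) \<longrightarrow> x = p))"

definition expected_score :: "(real ^ 'n \<Rightarrow> 'n \<Rightarrow> real) \<Rightarrow> real ^ 'n \<Rightarrow> real" where
  "expected_score s p = (\<Sum>j\<in>UNIV. p $ j * s p j)"

text \<open>g is an exposure function of s on D: g is the gradient of G (as a derivative within D,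
  so it is only determined modulo the all-ones vector), and s(p;j) = G(p) + <g(p), delta_j - p>.\<close>
definition exposure_function ::
  "(real ^ 'n) set \<Rightarrow> (real ^ 'n \<Rightarrow> 'n \<Rightarrow> real) \<Rightarrow> (real ^ 'n \<Rightarrow> real ^ 'n) \<Rightarrow> bool" where
  "exposure_function D s g \<longleftrightarrow>
     (\<forall>p\<in>D. (expected_score s has_derivative (\<lambda>v. g p \<bullet> v)) (at p within D)) \<and>
     (\<forall>p\<in>D. \<forall>j. s p j = expected_score s p + g p \<bullet> (delta j - p))"

definition convex_exposure :: "(real ^ 'n) set \<Rightarrow> (real ^ 'n \<Rightarrow> real ^ 'n) \<Rightarrow> bool" where
  "convex_exposure D g \<longleftrightarrow> convex {g p + c *\<^sub>R ones | p c. p \<in> D}"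

definition qa_pool ::
  "(real ^ 'n) set \<Rightarrow> (real ^ 'n \<Rightarrow> real ^ 'n) \<Rightarrow> ('m \<Rightarrow> real ^ 'n) \<Rightarrow> real ^ 'm \<Rightarrow> real ^ 'n" where
  "qa_pool D g P w = (THE q. q \<in> D \<and> (\<exists>c. g q = (\<Sum>i\<in>UNIV. w $ i *\<^sub>R g (P i)) + c *\<^sub>R ones))"

end

theory Submission
  imports Defs
begin

lemma simplex_sum: "x \<in> prob_simplex \<Longrightarrow> (\<Sum>i\<in>UNIV. x $ i) = 1"
  by (simp add: prob_simplex_def)

lemma ones_inner: "x \<in> prob_simplex \<Longrightarrow> (c *\<^sub>R ones) \<bullet> x = c"
  unfolding inner_vec_def ones_def
  by (simp add: sum_distrib_left[symmetric] simplex_sum)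

lemma inner_delta: "v \<bullet> delta j = v $ j"
  unfolding inner_vec_def delta_def by (simp add: if_distrib cong: if_cong)

lemma convex_simplex: "convex (prob_simplex :: (real ^ 'k) set)"
  unfolding convex_def prob_simplex_def
  by (auto simp: sum.distrib sum_distrib_left[symmetric])

lemma expect_formula:
  assumes "p \<in> prob_simplex"
  shows "(\<Sum>j\<in>UNIV. p $ j * (A + v \<bullet> (delta j - x))) = A + v \<bullet> (p - x)"
proof -
  have "(\<Sum>j\<in>UNIV. p $ j * (A + v \<bullet> (delta j - x)))
      = (\<Sum>j\<in>UNIV. p $ j * A) + (\<Sum>j\<in>UNIV. p $ j * v $ j) - (\<Sum>j\<in>UNIV. p $ j) * (v \<bullet> x)"
    by (simp add: inner_diff_right inner_delta algebra_simps sum.distrib sum_subtractf sum_distrib_right[symmetric] sum_distrib_left[symmetric])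
  also have "\<dots> = A + v \<bullet> p - v \<bullet> x"
    using simplex_sum[OF assms]
    by (simp add: sum_distrib_right[symmetric] sum_distrib_left[symmetric] inner_vec_def mult.commute)
  finally show ?thesis by (simp add: inner_diff_right)
qed

theorem theorem5p1:
  fixes D :: "(real ^ 'n) set"
    and s :: "real ^ 'n \<Rightarrow> 'n \<Rightarrow> real"
    and g :: "real ^ 'n \<Rightarrow> real ^ 'n"
    and P :: "'m::finite \<Rightarrow> real ^ 'n"
  assumes "forecast_domain D"
    and "proper_scoring_rule D s"
    and "\<forall>j. continuous_on D (\<lambda>p. s p j)"
    and "exposure_function D s g"
    and "convex_exposure D g"
    and "\<forall>i. P i \<in> D"
  shows "\<forall>j. concave_on prob_simplex (\<lambda>w :: real ^ 'm. s (qa_pool D g P w) j)"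
proof -
  define G where "G = expected_score s"
  have DS: "D \<subseteq> prob_simplex" using assms(1) by (simp add: forecast_domain_def)
  have sform: "\<And>p j. p \<in> D \<Longrightarrow> s p j = G p + g p \<bullet> (delta j - p)"
    using assms(4) by (simp add: exposure_function_def G_def)
  have Gdef: "\<And>p. G p = (\<Sum>j\<in>UNIV. p $ j * s p j)" by (simp add: G_def expected_score_def)
  have cross: "\<And>p x. p \<in> D \<Longrightarrow> x \<in> D \<Longrightarrow> (\<Sum>j\<in>UNIV. p $ j * s x j) = G x + g x \<bullet> (p - x)"
  proof -
    fix p x assume p: "p \<in> D" and x: "x \<in> D"
    have "(\<Sum>j\<in>UNIV. p $ j * s x j) = (\<Sum>j\<in>UNIV. p $ j * (G x + g x \<bullet> (delta j - x)))"
      using sform[OF x] by simp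
    also have "\<dots> = G x + g x \<bullet> (p - x)" using p DS by (intro expect_formula) auto
    finally show "(\<Sum>j\<in>UNIV. p $ j * s x j) = G x + g x \<bullet> (p - x)" .
  qed
  have K: "\<And>x p c. x \<in> D \<Longrightarrow> p \<in> D \<Longrightarrow>
      (g x + c *\<^sub>R ones) \<bullet> p - G p \<le> (g x + c *\<^sub>R ones) \<bullet> x - G x"
  proof -
    fix x p c assume x: "x \<in> D" and p: "p \<in> D"
    have "G p \<ge> G x + g x \<bullet> (p - x)"
      using assms(2) x p cross[OF p x] Gdef[of p] unfolding proper_scoring_rule_def by metis
    moreover have "ones \<bullet> p = 1" "ones \<bullet> x = 1" using x p DS ones_inner[of _ 1] by auto
    ultimately show "(g x + c *\<^sub>R ones) \<bullet> p - G p \<le> (g x + c *\<^sub>R ones) \<bullet> x - G x"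
      by (simp add: inner_add_left inner_diff_right)
  qed
  have Kstrict: "\<And>x p c. x \<in> D \<Longrightarrow> p \<in> D \<Longrightarrow> p \<noteq> x \<Longrightarrow>
      (g x + c *\<^sub>R ones) \<bullet> p - G p < (g x + c *\<^sub>R ones) \<bullet> x - G x"
  proof -
    fix x p c assume x: "x \<in> D" and p: "p \<in> D" and ne: "p \<noteq> x"
    have "G p > G x + g x \<bullet> (p - x)"
      using assms(2) x p cross[OF p x] Gdef[of p] ne
      by (simp add: proper_scoring_rule_def) (metis order_le_less)
    moreover have "ones \<bullet> p = 1" "ones \<bullet> x = 1" using x p DS ones_inner[of _ 1] by auto
    ultimately show "(g x + c *\<^sub>R ones) \<bullet> p - G p < (g x + c *\<^sub>R ones) \<bullet> x - G x"
      by (simp add: inner_add_left inner_diff_right)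
  qed
  have S: "\<And>x c j. x \<in> D \<Longrightarrow>
      s x j = (g x + c *\<^sub>R ones) $ j - ((g x + c *\<^sub>R ones) \<bullet> x - G x)"
  proof -
    fix x c j assume x: "x \<in> D"
    have "(c *\<^sub>R ones) \<bullet> x = c" using x DS ones_inner by auto
    then show "s x j = (g x + c *\<^sub>R ones) $ j - ((g x + c *\<^sub>R ones) \<bullet> x - G x)"
      using sform[OF x] by (simp add: inner_add_left inner_diff_right inner_delta ones_def)
  qed
  define T where "T = (\<lambda>w::real^'m. \<Sum>i\<in>UNIV. w $ i *\<^sub>R g (P i))"
  have pool: "\<And>w. w \<in> prob_simplex \<Longrightarrow>
      qa_pool D g P w \<in> D \<and> (\<exists>c. g (qa_pool D g P w) = T w + c *\<^sub>R ones)"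
  proof -
    fix w :: "real^'m" assume w: "w \<in> prob_simplex"
    have "T w \<in> {g p + c *\<^sub>R ones | p c. p \<in> D}"
      unfolding T_def
    proof (rule convex_sum)
      show "convex {g p + c *\<^sub>R ones | p c. p \<in> D}" using assms(5) by (simp add: convex_exposure_def)
      show "sum (($) w) UNIV = 1" using w by (simp add: simplex_sum)
      show "\<And>i. i \<in> UNIV \<Longrightarrow> 0 \<le> w $ i" using w by (simp add: prob_simplex_def)
      show "\<And>i. i \<in> UNIV \<Longrightarrow> g (P i) \<in> {g p + c *\<^sub>R ones | p c. p \<in> D}"
        using assms(6) by (metis (mono_tags, lifting) add.right_neutral mem_Collect_eq scale_zero_left)
    qed simp
    then obtain q c where q: "q \<in> D" "T w = g q + c *\<^sub>R ones" by blast
    have ex: "q \<in> D \<and> (\<exists>c. g q = T w + c *\<^sub>R ones)"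
    proof -
      have "g q = T w + (-c) *\<^sub>R ones" using q(2) by simp
      then show ?thesis using q(1) by blast
    qed
    have uniq: "q' = q" if "q' \<in> D \<and> (\<exists>c. g q' = T w + c *\<^sub>R ones)" for q'
    proof (rule ccontr)
      assume ne: "q' \<noteq> q"
      from that obtain c' where q': "q' \<in> D" "g q' = T w + c' *\<^sub>R ones" by blast
      have e1: "T w = g q + c *\<^sub>R ones" using q by simp
      have e2: "T w = g q' + (-c') *\<^sub>R ones" using q' by simp
      have "T w \<bullet> q' - G q' < T w \<bullet> q - G q"
        using Kstrict[OF q(1) q'(1) ne, of "c"] by (simp only: e1[symmetric])
      moreover have "T w \<bullet> q - G q < T w \<bullet> q' - G q'"
        using Kstrict[OF q'(1) q(1) ne[symmetric], of "-c'"] by (simp only: e2[symmetric])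
      ultimately show False by simp
    qed
    have "qa_pool D g P w = (THE q. q \<in> D \<and> (\<exists>c. g q = T w + c *\<^sub>R ones))"
      by (simp add: qa_pool_def T_def)
    also have "\<dots> = q"
      by (rule the_equality) (use ex uniq in blast)+
    finally have "qa_pool D g P w = q" .
    then show "qa_pool D g P w \<in> D \<and> (\<exists>c. g (qa_pool D g P w) = T w + c *\<^sub>R ones)"
      using ex by simp
  qed
  have SW: "\<And>w j. w \<in> prob_simplex \<Longrightarrow>
      s (qa_pool D g P w) j = T w $ j - (T w \<bullet> qa_pool D g P w - G (qa_pool D g P w))"
  proof -
    fix w :: "real^'m" and j assume w: "w \<in> prob_simplex"
    from pool[OF w] obtain c where q: "qa_pool D g P w \<in> D" "g (qa_pool D g P w) = T w + c *\<^sub>R ones" by blast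
    have "T w = g (qa_pool D g P w) + (-c) *\<^sub>R ones" using q by simp
    then show "s (qa_pool D g P w) j = T w $ j - (T w \<bullet> qa_pool D g P w - G (qa_pool D g P w))"
      using S[OF q(1), where c="-c" and j=j] by simp
  qed
  have KW: "\<And>w p. w \<in> prob_simplex \<Longrightarrow> p \<in> D \<Longrightarrow>
      T w \<bullet> p - G p \<le> T w \<bullet> qa_pool D g P w - G (qa_pool D g P w)"
  proof -
    fix w :: "real^'m" and p assume w: "w \<in> prob_simplex" and p: "p \<in> D"
    from pool[OF w] obtain c where q: "qa_pool D g P w \<in> D" "g (qa_pool D g P w) = T w + c *\<^sub>R ones" by blast
    have "T w = g (qa_pool D g P w) + (-c) *\<^sub>R ones" using q by simp
    then show "T w \<bullet> p - G p \<le> T w \<bullet> qa_pool D g P w - G (qa_pool D g P w)"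
      using K[OF q(1) p, of "-c"] by simp
  qed
  have Tlin: "\<And>u v a b. T (a *\<^sub>R u + b *\<^sub>R v) = a *\<^sub>R T u + b *\<^sub>R T v"
    by (simp add: T_def scaleR_add_left sum.distrib scaleR_sum_right)
  show ?thesis
  proof (intro allI, unfold concave_on_iff, intro conjI convex_simplex ballI allI impI)
    fix j and u v :: "real^'m" and a b :: real
    assume u: "u \<in> prob_simplex" and v: "v \<in> prob_simplex" and a: "0 \<le> a" and b: "0 \<le> b" and ab: "a + b = 1"
    define w where "w = a *\<^sub>R u + b *\<^sub>R v"
    have w: "w \<in> prob_simplex" using convex_simplex u v a b ab unfolding convex_def w_def by blast
    define q where "q = qa_pool D g P w"
    have qD: "q \<in> D" using pool[OF w] q_def by simp
    have Tw: "T w = a *\<^sub>R T u + b *\<^sub>R T v" using Tlin w_def by simp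
    have h1: "T u \<bullet> q - G q \<le> T u \<bullet> qa_pool D g P u - G (qa_pool D g P u)" using KW[OF u qD] .
    have h2: "T v \<bullet> q - G q \<le> T v \<bullet> qa_pool D g P v - G (qa_pool D g P v)" using KW[OF v qD] .
    have eq: "T w \<bullet> q - G q = a * (T u \<bullet> q - G q) + b * (T v \<bullet> q - G q)"
    proof -
      have hT: "T w \<bullet> q = a * (T u \<bullet> q) + b * (T v \<bullet> q)" by (simp add: Tw inner_add_left)
      have E: "a * (T u \<bullet> q - G q) + b * (T v \<bullet> q - G q) = a * (T u \<bullet> q) + b * (T v \<bullet> q) - (a + b) * G q"
        by (simp only: right_diff_distrib distrib_right)
      moreover have "(a + b) * G q = G q" using ab by simp
      ultimately show ?thesis using hT by linarith
    qed
    define Hu where "Hu = T u \<bullet> qa_pool D g P u - G (qa_pool D g P u)"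
    define Hv where "Hv = T v \<bullet> qa_pool D g P v - G (qa_pool D g P v)"
    define Xu where "Xu = T u \<bullet> q - G q"
    define Xv where "Xv = T v \<bullet> q - G q"
    have i1: "a * Xu \<le> a * Hu" using h1 a unfolding Xu_def Hu_def by (intro mult_left_mono) auto
    have i2: "b * Xv \<le> b * Hv" using h2 b unfolding Xv_def Hv_def by (intro mult_left_mono) auto
    have su: "s (qa_pool D g P u) j = T u $ j - Hu" using SW[OF u, of j] Hu_def by simp
    have sv: "s (qa_pool D g P v) j = T v $ j - Hv" using SW[OF v, of j] Hv_def by simp
    have sw: "s q j = T w $ j - (a * Xu + b * Xv)" using SW[OF w, of j] eq q_def Xu_def Xv_def by simp
    have tj: "T w $ j = a * T u $ j + b * T v $ j" by (simp add: Tw)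
    have "a * s (qa_pool D g P u) j + b * s (qa_pool D g P v) j = a * T u $ j + b * T v $ j - (a * Hu + b * Hv)"
      unfolding su sv by (simp add: right_diff_distrib)
    then have "a * s (qa_pool D g P u) j + b * s (qa_pool D g P v) j \<le> s q j"
      using sw tj i1 i2 by linarith
    then show "a * s (qa_pool D g P u) j + b * s (qa_pool D g P v) j \<le> s (qa_pool D g P (a *\<^sub>R u + b *\<^sub>R v)) j"
      using q_def w_def by simp
  qed
qed

end
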